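(* Let $\lambda>0$, $1<p<\infty$, $\alpha\in\mathbb R$, and $w(t):=t^{\alpha}$ on $\mathbb R_+=(0,\infty)$. Then (1) $w\in A_p(\mu)$ if and only if $-1-2\lambda<\alpha<p-1+2\lambda(p-1)$; (2) $w\in \widetilde A_{p,\lambda}$ if and only if $-1<\alpha<p-1+(2\lambda+1)p$.
   Context: On $\mathbb R_+=(0,\infty)$ let $d\mu(x)=x^{2\lambda}\,dx$ and $d\nu_\lambda(x)=x^{2\lambda+1}\,dx$, where $dx$ is Lebesgue measure; "interval" means an interval $B=(a,b)\subset\mathbb R_+$; $p'=p/(p-1)$. $A_p(\mu)$ is the classical Muckenhoupt class on $(\mathbb R_+,|\cdot|,\mu)$: $w\ge0$ with $\sup_B\big(\frac1{\mu(B)}\int_B w\,d\mu\big)\big(\frac1{\mu(B)}\int_B w^{-1/(p-1)}\,d\mu\big)^{p-1}<\infty$, the supremum over intervals $B\subset\mathbb R_+$. $\widetilde A_{p,\lambda}$ is the class of non-negative measurable $w$ for which there is $C>0$ such that for every interval $B\subset\mathbb R_+$, $\big(\frac1{\nu_\lambda(B)}\int_B w(t)\,dt\big)\big(\frac1{\nu_\lambda(B)}\int_B t^{(2\lambda+1)p'}w(t)^{-\frac1{p-1}}\,dt\big)^{p-1}<C.$ *)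

theory Defs
  imports "HOL-Analysis.Analysis"
begin

definition int_on :: "real \<Rightarrow> real \<Rightarrow> (real \<Rightarrow> ennreal) \<Rightarrow> ennreal" where
  "int_on a b f = (\<integral>\<^sup>+ x \<in> {a<..<b}. f x \<partial>lborel)"

definition neg_pow :: "real \<Rightarrow> real \<Rightarrow> ennreal" where
  "neg_pow p v = (if v = 0 then top else ennreal (v powr (-1 / (p - 1))))"

definition mu_meas :: "real \<Rightarrow> real \<Rightarrow> real \<Rightarrow> real" where
  "mu_meas lam a b = enn2real (int_on a b (\<lambda>x. ennreal (x powr (2 * lam))))"

definition nu_meas :: "real \<Rightarrow> real \<Rightarrow> real \<Rightarrow> real" where
  "nu_meas lam a b = enn2real (int_on a b (\<lambda>x. ennreal (x powr (2 * lam + 1))))"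

definition conj_exp :: "real \<Rightarrow> real" where
  "conj_exp p = p / (p - 1)"

definition Ap_mu :: "real \<Rightarrow> real \<Rightarrow> (real \<Rightarrow> real) set" where
  "Ap_mu lam p = {w. w \<in> borel_measurable lborel \<and> (\<forall>t>0. 0 \<le> w t) \<and>
     (\<exists>C::real. \<forall>a b. 0 \<le> a \<and> a < b \<longrightarrow>
        int_on a b (\<lambda>x. ennreal (w x * x powr (2 * lam))) < top \<and>
        int_on a b (\<lambda>x. neg_pow p (w x) * ennreal (x powr (2 * lam))) < top \<and>
        (enn2real (int_on a b (\<lambda>x. ennreal (w x * x powr (2 * lam)))) / mu_meas lam a b) *
        (enn2real (int_on a b (\<lambda>x. neg_pow p (w x) * ennreal (x powr (2 * lam)))) / mu_meas lam a b)
           powr (p - 1) \<le> C)}"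

definition Ap_tilde :: "real \<Rightarrow> real \<Rightarrow> (real \<Rightarrow> real) set" where
  "Ap_tilde p lam = {w. w \<in> borel_measurable lborel \<and> (\<forall>t>0. 0 \<le> w t) \<and>
     (\<exists>C::real. \<forall>a b. 0 \<le> a \<and> a < b \<longrightarrow>
        int_on a b (\<lambda>t. ennreal (w t)) < top \<and>
        int_on a b (\<lambda>t. ennreal (t powr ((2 * lam + 1) * conj_exp p)) * neg_pow p (w t)) < top \<and>
        (enn2real (int_on a b (\<lambda>t. ennreal (w t))) / nu_meas lam a b) *
        (enn2real (int_on a b (\<lambda>t. ennreal (t powr ((2 * lam + 1) * conj_exp p)) * neg_pow p (w t)))
           / nu_meas lam a b) powr (p - 1) < C)}"

end

theory Submission imports Defs begin
lemma int_pow: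
  fixes \<beta> a b :: real
  assumes "\<beta> > -1" "0 \<le> a" "a \<le> b"
  shows "int_on a b (\<lambda>x. ennreal (x powr \<beta>)) = ennreal ((b powr (\<beta>+1) - a powr (\<beta>+1))/(\<beta>+1))"
proof -
  have hb: "((\<lambda>x. x powr \<beta>) has_integral (b powr (\<beta>+1) / (\<beta>+1))) {0..b}"
    using has_integral_powr_from_0 assms by auto
  have ha: "((\<lambda>x. x powr \<beta>) has_integral (a powr (\<beta>+1) / (\<beta>+1))) {0..a}"
    using has_integral_powr_from_0 assms by auto
  have ib: "(\<lambda>x. x powr \<beta>) integrable_on {0..b}" using hb by blast
  have iab: "(\<lambda>x. x powr \<beta>) integrable_on {a..b}"
    by (rule integrable_subinterval_real[OF ib]) (use assms in auto)
  have "integral {0..a} (\<lambda>x. x powr \<beta>) + integral {a..b} (\<lambda>x. x powr \<beta>) = integral {0..b} (\<lambda>x. x powr \<beta>)"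
    using Henstock_Kurzweil_Integration.integral_combine[where a=0 and c=a and b=b and f="\<lambda>x. x powr \<beta>"] assms ib by auto
  then have "integral {a..b} (\<lambda>x. x powr \<beta>) = (b powr (\<beta>+1) - a powr (\<beta>+1))/(\<beta>+1)"
    using integral_unique[OF ha] integral_unique[OF hb] by (simp add: diff_divide_distrib)
  then have "((\<lambda>x. x powr \<beta>) has_integral ((b powr (\<beta>+1) - a powr (\<beta>+1))/(\<beta>+1))) {a<..<b}"
    using iab has_integral_Icc_iff_Ioo by (metis has_integral_integrable_integral)
  from nn_integral_has_integral_lebesgue'[OF _ this]
  show ?thesis unfolding int_on_def by simp
qed

lemma int_ln:
  fixes e :: real
  assumes "0 < e" "e \<le> 1"
  shows "int_on e 1 (\<lambda>x. ennreal (x powr -1)) = ennreal (- ln e)"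
proof -
  have "((\<lambda>x. x powr -1) has_integral (ln 1 - ln e)) {e..1}"
  proof (rule fundamental_theorem_of_calculus)
    fix x assume x: "x \<in> {e..1}"
    then have "x > 0" using assms by auto
    then have "(ln has_real_derivative (x powr -1)) (at x within {e..1})"
      by (auto intro!: derivative_eq_intros simp: powr_minus divide_inverse)
    then show "(ln has_vector_derivative (x powr -1)) (at x within {e..1})"
      by (simp add: has_real_derivative_iff_has_vector_derivative)
  qed (use assms in auto)
  then have "((\<lambda>x. x powr -1) has_integral (- ln e)) {e<..<1}"
    using has_integral_Icc_iff_Ioo[THEN iffD1] by simp
  from nn_integral_has_integral_lebesgue'[OF _ this]
  show ?thesis unfolding int_on_def by simp
qed



definition FF :: "real \<Rightarrow> real \<Rightarrow> real \<Rightarrow> real" where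
  "FF \<beta> a b = (b powr (\<beta>+1) - a powr (\<beta>+1))/(\<beta>+1)"

lemma FF_mvt:
  fixes \<beta> a b :: real
  assumes "\<beta> > -1" "0 < a" "a < b"
  shows "\<exists>z. a < z \<and> z < b \<and> FF \<beta> a b = (b - a) * z powr \<beta>"
proof -
  have d: "\<And>x. a \<le> x \<Longrightarrow> x \<le> b \<Longrightarrow> ((\<lambda>x. x powr (\<beta>+1)) has_real_derivative (\<beta>+1) * x powr (\<beta>+1-1)) (at x)"
    using assms by (intro has_real_derivative_powr) auto
  from MVT2[OF assms(3) d] obtain z where z: "a < z" "z < b" "b powr (\<beta>+1) - a powr (\<beta>+1) = (b - a) * ((\<beta>+1) * z powr \<beta>)"
    by auto
  then show ?thesis using assms unfolding FF_def by (intro exI[of _ z]) auto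
qed

lemma FF_pos:
  fixes \<beta> a b :: real
  assumes "\<beta> > -1" "0 \<le> a" "a < b"
  shows "FF \<beta> a b > 0"
proof -
  have "a powr (\<beta>+1) < b powr (\<beta>+1)"
    using assms by (cases "a = 0") (auto intro: powr_less_mono2)
  then show ?thesis using assms unfolding FF_def by auto
qed

lemma FF_upper:
  fixes \<beta> a b :: real
  assumes "\<beta> > -1" "0 \<le> a" "a < b"
  shows "FF \<beta> a b \<le> (2/(\<beta>+1) + 1 + 2 powr (-\<beta>)) * b powr \<beta> * (b - a)"
proof (cases "a \<le> b/2")
  case True
  have b: "b > 0" using assms by auto
  have "FF \<beta> a b \<le> b powr (\<beta>+1) / (\<beta>+1)"
    unfolding FF_def using assms by (intro divide_right_mono) auto
  also have "b powr (\<beta>+1) = b powr \<beta> * b" using b by (simp add: powr_add)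
  also have "b powr \<beta> * b / (\<beta>+1) \<le> b powr \<beta> * (2 * (b - a)) / (\<beta>+1)"
    using True assms b by (intro divide_right_mono mult_left_mono) auto
  also have "\<dots> = (2/(\<beta>+1)) * b powr \<beta> * (b - a)" by simp
  also have "\<dots> \<le> (2/(\<beta>+1) + 1 + 2 powr (-\<beta>)) * b powr \<beta> * (b - a)"
    using assms by (intro mult_right_mono) auto
  finally show ?thesis .
next
  case False
  then have a: "a > 0" "b > 0" using assms by auto
  obtain z where z: "a < z" "z < b" "FF \<beta> a b = (b - a) * z powr \<beta>"
    using FF_mvt[OF assms(1) a(1) assms(3)] by blast
  have "z powr \<beta> \<le> (1 + 2 powr (-\<beta>)) * b powr \<beta>"
  proof (cases "\<beta> \<ge> 0")
    case True
    then have "z powr \<beta> \<le> b powr \<beta>" using z a by (intro powr_mono2) auto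
    moreover have "(1 + 2 powr (-\<beta>)) * b powr \<beta> = b powr \<beta> + 2 powr (-\<beta>) * b powr \<beta>" by (simp add: distrib_right)
    moreover have "0 \<le> 2 powr (-\<beta>) * b powr \<beta>" by simp
    ultimately show ?thesis by linarith
  next
    case False
    have "z powr \<beta> \<le> (b/2) powr \<beta>" using z a \<open>\<not> a \<le> b/2\<close> False
      by (intro powr_mono2') auto
    also have "(b/2) powr \<beta> = b powr \<beta> / 2 powr \<beta>"
      using a by (simp add: powr_divide)
    also have "\<dots> = 2 powr (-\<beta>) * b powr \<beta>"
      by (simp add: powr_minus_divide)
    finally have "z powr \<beta> \<le> 2 powr (-\<beta>) * b powr \<beta>" .
    moreover have "(1 + 2 powr (-\<beta>)) * b powr \<beta> = b powr \<beta> + 2 powr (-\<beta>) * b powr \<beta>" by (simp add: distrib_right)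
    moreover have "0 \<le> b powr \<beta>" by simp
    ultimately show ?thesis by linarith
  qed
  then have "FF \<beta> a b \<le> (b - a) * ((1 + 2 powr (-\<beta>)) * b powr \<beta>)"
    using z assms by (simp add: mult_left_mono)
  also have "\<dots> \<le> (2/(\<beta>+1) + 1 + 2 powr (-\<beta>)) * b powr \<beta> * (b - a)"
    using assms by (simp add: algebra_simps)
  finally show ?thesis .
qed

lemma FF_lower:
  fixes \<gamma> a b :: real
  assumes "\<gamma> \<ge> 0" "0 \<le> a" "a < b"
  shows "FF \<gamma> a b \<ge> ((1/2) powr \<gamma> / 2) * b powr \<gamma> * (b - a)"
proof -
  define m where "m = (a + b) / 2"
  have m: "0 < m" "a < m" "m < b" using assms unfolding m_def by auto
  obtain z where z: "m < z" "z < b" "FF \<gamma> m b = (b - m) * z powr \<gamma>"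
    using FF_mvt[of \<gamma> m b] m assms by auto
  have "FF \<gamma> m b \<le> FF \<gamma> a b"
    unfolding FF_def using assms m by (intro divide_right_mono diff_left_mono powr_mono2) auto
  have "(b/2) powr \<gamma> \<le> z powr \<gamma>" using z m assms unfolding m_def by (intro powr_mono2) auto
  moreover have "(b/2) powr \<gamma> = (1/2) powr \<gamma> * b powr \<gamma>"
    using assms by (simp add: powr_divide)
  ultimately have hz: "(1/2) powr \<gamma> * b powr \<gamma> \<le> z powr \<gamma>" by simp
  have "((1/2) powr \<gamma> / 2) * b powr \<gamma> * (b - a) = ((1/2) powr \<gamma> * b powr \<gamma>) * ((b-a)/2)" by simp
  also have "\<dots> \<le> z powr \<gamma> * ((b-a)/2)" using hz assms by (intro mult_right_mono) auto
  also have "\<dots> = (b - m) * z powr \<gamma>" unfolding m_def by (simp add: field_simps)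
  finally have "((1/2) powr \<gamma> / 2) * b powr \<gamma> * (b - a) \<le> (b - m) * z powr \<gamma>" .
  with z \<open>FF \<gamma> m b \<le> FF \<gamma> a b\<close> show ?thesis by linarith
qed

lemma FF_bound:
  fixes b1 b2 g p :: real
  assumes "b1 > -1" "b2 > -1" "g \<ge> 0" "p > 1" "b1 - g + (b2 - g) * (p - 1) = 0"
  shows "\<exists>C. \<forall>a b. 0 \<le> a \<and> a < b \<longrightarrow>
     (FF b1 a b / FF g a b) * (FF b2 a b / FF g a b) powr (p - 1) \<le> C"
proof -
  define c where "c = (1/2) powr g / 2"
  define K1 where "K1 = 2/(b1+1) + 1 + 2 powr (-b1)"
  define K2 where "K2 = 2/(b2+1) + 1 + 2 powr (-b2)"
  have c: "c > 0" unfolding c_def by auto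
  have "0 \<le> 2/(b1+1)" "0 \<le> 2/(b2+1)" using assms by auto
  moreover have "0 \<le> 2 powr (-b1)" "0 \<le> 2 powr (-b2)" by auto
  ultimately have K1: "K1 > 0" "K2 > 0" unfolding K1_def K2_def by linarith+
  show ?thesis
  proof (intro exI allI impI, elim conjE)
    fix a b :: real assume ab: "0 \<le> a" "a < b"
    have b: "b > 0" and d: "b - a > 0" using ab by auto
    have Fg: "FF g a b \<ge> c * b powr g * (b - a)" using FF_lower[OF assms(3) ab] unfolding c_def .
    have Fgp: "c * b powr g * (b - a) > 0" using c b d by auto
    have r: "FF bb a b / FF g a b \<le> (K / c) * b powr (bb - g)"
      if "bb > -1" "FF bb a b \<le> K * b powr bb * (b - a)" "K > 0" for bb K
    proof -
      have "FF bb a b / FF g a b \<le> (K * b powr bb * (b - a)) / (c * b powr g * (b - a))"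
        using FF_pos[OF that(1) ab] Fg Fgp that(2)
        by (intro frac_le) auto
      also have "\<dots> = (K / c) * b powr (bb - g)"
        using b d c by (simp add: powr_diff field_simps)
      finally show ?thesis .
    qed
    have r1: "FF b1 a b / FF g a b \<le> (K1 / c) * b powr (b1 - g)"
      by (rule r[OF assms(1) _ K1(1)]) (use FF_upper[OF assms(1) ab] K1_def in simp)
    have r2: "FF b2 a b / FF g a b \<le> (K2 / c) * b powr (b2 - g)"
      by (rule r[OF assms(2) _ K1(2)]) (use FF_upper[OF assms(2) ab] K2_def in simp)
    have pos1: "FF b1 a b / FF g a b \<ge> 0" and pos2: "FF b2 a b / FF g a b \<ge> 0"
      using FF_pos[OF assms(1) ab] FF_pos[OF assms(2) ab] FF_pos[of g a b] assms ab by auto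
    have r2': "(FF b2 a b / FF g a b) powr (p - 1) \<le> ((K2 / c) * b powr (b2 - g)) powr (p - 1)"
      using r2 pos2 assms by (intro powr_mono2) auto
    have "(FF b1 a b / FF g a b) * (FF b2 a b / FF g a b) powr (p - 1)
        \<le> ((K1 / c) * b powr (b1 - g)) * (((K2 / c) * b powr (b2 - g)) powr (p - 1))"
      using r1 r2' pos1 by (intro mult_mono) auto
    also have "\<dots> = (K1 / c) * (K2 / c) powr (p - 1) * b powr (b1 - g + (b2 - g) * (p - 1))"
    proof -
      have "((K2 / c) * b powr (b2 - g)) powr (p - 1) = (K2/c) powr (p-1) * (b powr (b2 - g)) powr (p-1)"
        by (rule powr_mult)
      also have "(b powr (b2-g)) powr (p-1) = b powr ((b2-g)*(p-1))" by (rule powr_powr)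
      finally have e2: "((K2 / c) * b powr (b2 - g)) powr (p - 1) = (K2/c) powr (p-1) * b powr ((b2-g)*(p-1))" .
      have e3: "b powr (b1 - g + (b2 - g) * (p - 1)) = b powr (b1 - g) * b powr ((b2-g)*(p-1))"
        by (rule powr_add)
      show ?thesis unfolding e2 e3 by (simp only: ac_simps)
    qed
    also have "\<dots> = (K1 / c) * (K2 / c) powr (p - 1)" using assms(5) b by simp
    finally show "(FF b1 a b / FF g a b) * (FF b2 a b / FF g a b) powr (p - 1) \<le> (K1 / c) * (K2 / c) powr (p - 1)" .
  qed
qed

lemma int_on_cong:
  assumes "\<And>x. a < x \<Longrightarrow> x < b \<Longrightarrow> f x = g x"
  shows "int_on a b f = int_on a b g"
  unfolding int_on_def by (intro nn_integral_cong) (auto simp: assms split: split_indicator)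

lemma int_on_mono:
  assumes "a' \<le> a" "b \<le> b'" "\<And>x. a < x \<Longrightarrow> x < b \<Longrightarrow> f x \<le> g x"
  shows "int_on a b f \<le> int_on a' b' g"
  unfolding int_on_def using assms by (intro nn_integral_mono) (auto split: split_indicator)

lemma int_div:
  fixes \<beta> :: real
  assumes "\<beta> \<le> -1"
  shows "int_on 0 1 (\<lambda>x. ennreal (x powr \<beta>)) = top"
proof (rule ccontr)
  assume "int_on 0 1 (\<lambda>x. ennreal (x powr \<beta>)) \<noteq> top"
  then obtain r where r: "int_on 0 1 (\<lambda>x. ennreal (x powr \<beta>)) = ennreal r" "r \<ge> 0"
    using ennreal_cases by (metis less_top)
  define e where "e = exp (-(r+1))"
  have e: "0 < e" "e \<le> 1" using r unfolding e_def by auto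
  have "ennreal (- ln e) = int_on e 1 (\<lambda>x. ennreal (x powr -1))" using int_ln[OF e] by simp
  also have "\<dots> \<le> int_on 0 1 (\<lambda>x. ennreal (x powr \<beta>))"
  proof (rule int_on_mono)
    fix x :: real assume x: "e < x" "x < 1"
    show "ennreal (x powr -1) \<le> ennreal (x powr \<beta>)"
      by (rule ennreal_leI, rule powr_mono') (use x e assms in auto)
  qed (use e in auto)
  finally have "ennreal (r + 1) \<le> ennreal r" using r unfolding e_def by simp
  then show False using r by (simp add: ennreal_le_iff)
qed

lemma rw1:
  "0 \<le> a \<Longrightarrow> int_on a b (\<lambda>x. ennreal (x powr al * x powr c)) = int_on a b (\<lambda>x. ennreal (x powr (al + c)))"
  by (intro int_on_cong) (simp add: powr_add)

lemma rw2:
  assumes "0 \<le> a"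
  shows "int_on a b (\<lambda>x. neg_pow p (x powr al) * ennreal (x powr c))
     = int_on a b (\<lambda>x. ennreal (x powr (al * (-1/(p-1)) + c)))"
proof (rule int_on_cong)
  fix x assume x: "a < x" "x < b"
  then have "x > 0" using assms by auto
  then have nz: "x powr al \<noteq> 0" by simp
  have eq: "(x powr al) powr (-1/(p-1)) * x powr c = x powr (al * (-1/(p-1)) + c)"
    by (subst powr_add) (simp add: powr_powr)
  have "neg_pow p (x powr al) = ennreal ((x powr al) powr (-1/(p-1)))"
    using nz unfolding neg_pow_def by simp
  then have "neg_pow p (x powr al) * ennreal (x powr c) = ennreal ((x powr al) powr (-1/(p-1)) * x powr c)"
    by (simp add: ennreal_mult)
  also have "\<dots> = ennreal (x powr (al * (-1/(p-1)) + c))" by (rule arg_cong[where f=ennreal]) (rule eq)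
  finally show "neg_pow p (x powr al) * ennreal (x powr c) = ennreal (x powr (al * (-1/(p-1)) + c))" .
qed

lemma rw3:
  assumes "0 \<le> a"
  shows "int_on a b (\<lambda>x. ennreal (x powr c) * neg_pow p (x powr al))
     = int_on a b (\<lambda>x. ennreal (x powr (c + al * (-1/(p-1)))))"
proof -
  have "int_on a b (\<lambda>x. ennreal (x powr c) * neg_pow p (x powr al)) =
        int_on a b (\<lambda>x. neg_pow p (x powr al) * ennreal (x powr c))"
    by (simp add: mult.commute)
  also have "\<dots> = int_on a b (\<lambda>x. ennreal (x powr (al * (-1/(p-1)) + c)))" by (rule rw2[OF assms])
  also have "\<dots> = int_on a b (\<lambda>x. ennreal (x powr (c + al * (-1/(p-1)))))" by (simp add: add.commute)
  finally show ?thesis .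
qed

lemma int_FF:
  "\<beta> > -1 \<Longrightarrow> 0 \<le> a \<Longrightarrow> a \<le> b \<Longrightarrow> int_on a b (\<lambda>x. ennreal (x powr \<beta>)) = ennreal (FF \<beta> a b)"
  using int_pow unfolding FF_def by simp

lemma enn_FF:
  "\<beta> > -1 \<Longrightarrow> 0 \<le> a \<Longrightarrow> a < b \<Longrightarrow> enn2real (int_on a b (\<lambda>x. ennreal (x powr \<beta>))) = FF \<beta> a b"
  using int_FF[of \<beta> a b] FF_pos[of \<beta> a b] by simp

lemma expo_aux:
  fixes p x y :: real
  assumes "p > 1"
  shows "x * (-1/(p-1)) + y > -1 \<longleftrightarrow> x < (y + 1) * (p - 1)"
proof -
  have "x * (-1/(p-1)) + y > -1 \<longleftrightarrow> x / (p-1) < y + 1" by (simp add: field_simps)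
  also have "\<dots> \<longleftrightarrow> x < (y + 1) * (p - 1)" using assms by (simp add: pos_divide_less_eq)
  finally show ?thesis .
qed

lemma lin_aux:
  fixes a L k m p :: real
  assumes "k * (p - 1) = p" "m * (p - 1) = -1"
  shows "a - L + (L * k + a * m - L) * (p - 1) = 0"
proof -
  have "a - L + (L * k + a * m - L) * (p - 1) = a - L + L * (k * (p - 1)) + a * (m * (p - 1)) - L * (p - 1)"
    by (simp add: algebra_simps)
  also have "\<dots> = 0" unfolding assms by (simp add: algebra_simps)
  finally show ?thesis .
qed

theorem proposition1p1:
  fixes lam p alpha :: real
  assumes "lam > 0" and "1 < p"
  shows "((\<lambda>t. t powr alpha) \<in> Ap_mu lam p \<longleftrightarrow>
            -1 - 2 * lam < alpha \<and> alpha < p - 1 + 2 * lam * (p - 1))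
       \<and> ((\<lambda>t. t powr alpha) \<in> Ap_tilde p lam \<longleftrightarrow>
            -1 < alpha \<and> alpha < p - 1 + (2 * lam + 1) * p)"
proof (intro conjI)
  have meas: "(\<lambda>t. t powr alpha) \<in> borel_measurable lborel" by measurable
  have p1: "p - 1 > 0" using assms by simp
  show "(\<lambda>t. t powr alpha) \<in> Ap_mu lam p \<longleftrightarrow>
            -1 - 2 * lam < alpha \<and> alpha < p - 1 + 2 * lam * (p - 1)"
  proof
    assume "(\<lambda>t. t powr alpha) \<in> Ap_mu lam p"
    then obtain C where C: "\<forall>a b. 0 \<le> a \<and> a < b \<longrightarrow>
        int_on a b (\<lambda>x. ennreal (x powr alpha * x powr (2 * lam))) < top \<and>
        int_on a b (\<lambda>x. neg_pow p (x powr alpha) * ennreal (x powr (2 * lam))) < top \<and>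
        (enn2real (int_on a b (\<lambda>x. ennreal (x powr alpha * x powr (2 * lam)))) / mu_meas lam a b) *
        (enn2real (int_on a b (\<lambda>x. neg_pow p (x powr alpha) * ennreal (x powr (2 * lam)))) / mu_meas lam a b)
           powr (p - 1) \<le> C"
      unfolding Ap_mu_def by blast
    from C[rule_format, of 0 1] have
      f1: "int_on 0 1 (\<lambda>x. ennreal (x powr (alpha + 2 * lam))) < top" and
      f2: "int_on 0 1 (\<lambda>x. ennreal (x powr (alpha * (-1/(p-1)) + 2 * lam))) < top"
      by (simp_all add: rw1 rw2)
    have "alpha + 2 * lam > -1" using f1 int_div[of "alpha + 2 * lam"] by force
    moreover have "alpha * (-1/(p-1)) + 2 * lam > -1"
      using f2 int_div[of "alpha * (-1/(p-1)) + 2 * lam"] by force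
    then have "alpha < (2 * lam + 1) * (p - 1)" by (rule iffD1[OF expo_aux[OF assms(2)]])
    ultimately show "-1 - 2 * lam < alpha \<and> alpha < p - 1 + 2 * lam * (p - 1)"
      by (simp add: algebra_simps)
  next
    assume rng: "-1 - 2 * lam < alpha \<and> alpha < p - 1 + 2 * lam * (p - 1)"
    have b1: "alpha + 2 * lam > -1" using rng by simp
    have "alpha < (2 * lam + 1) * (p - 1)" using rng by (simp add: algebra_simps)
    then have b2: "alpha * (-1/(p-1)) + 2 * lam > -1"
      by (rule iffD2[OF expo_aux[OF assms(2), of alpha "2 * lam"]])
    have ex: "(alpha + 2 * lam) - 2 * lam + (alpha * (-1/(p-1)) + 2 * lam - 2 * lam) * (p - 1) = 0"
      using p1 by (simp add: field_simps)
    obtain C where C: "\<forall>a b. 0 \<le> a \<and> a < b \<longrightarrow>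
      (FF (alpha + 2 * lam) a b / FF (2 * lam) a b) *
      (FF (alpha * (-1/(p-1)) + 2 * lam) a b / FF (2 * lam) a b) powr (p - 1) \<le> C"
      using FF_bound[OF b1 b2 _ assms(2) ex] assms(1) by auto
    show "(\<lambda>t. t powr alpha) \<in> Ap_mu lam p"
      unfolding Ap_mu_def
    proof (intro CollectI conjI meas exI[of _ C] allI impI)
      fix t :: real show "0 \<le> t powr alpha" by simp
    next
      fix a b :: real assume "0 \<le> a \<and> a < b"
      then have ab: "0 \<le> a" "a < b" by auto
      show "int_on a b (\<lambda>x. ennreal (x powr alpha * x powr (2 * lam))) < top"
        using ab by (simp add: rw1 int_FF[OF b1])
    next
      fix a b :: real assume "0 \<le> a \<and> a < b"
      then have ab: "0 \<le> a" "a < b" by auto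
      show "int_on a b (\<lambda>x. neg_pow p (x powr alpha) * ennreal (x powr (2 * lam))) < top"
        unfolding rw2[OF ab(1)] int_FF[OF b2 ab(1) less_imp_le[OF ab(2)]] by simp
    next
      fix a b :: real assume "0 \<le> a \<and> a < b"
      then have ab: "0 \<le> a" "a < b" by auto
      have g: "2 * lam > -1" using assms by simp
      show "(enn2real (int_on a b (\<lambda>x. ennreal (x powr alpha * x powr (2 * lam)))) / mu_meas lam a b) *
        (enn2real (int_on a b (\<lambda>x. neg_pow p (x powr alpha) * ennreal (x powr (2 * lam)))) / mu_meas lam a b)
           powr (p - 1) \<le> C"
        unfolding rw1[OF ab(1)] rw2[OF ab(1)] mu_meas_def enn_FF[OF b1 ab] enn_FF[OF b2 ab] enn_FF[OF g ab]
        using ab C by simp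
    qed
  qed
  show "(\<lambda>t. t powr alpha) \<in> Ap_tilde p lam \<longleftrightarrow>
            -1 < alpha \<and> alpha < p - 1 + (2 * lam + 1) * p"
  proof
    assume "(\<lambda>t. t powr alpha) \<in> Ap_tilde p lam"
    then obtain C where C: "\<forall>a b. 0 \<le> a \<and> a < b \<longrightarrow>
        int_on a b (\<lambda>t. ennreal (t powr alpha)) < top \<and>
        int_on a b (\<lambda>t. ennreal (t powr ((2 * lam + 1) * conj_exp p)) * neg_pow p (t powr alpha)) < top \<and>
        (enn2real (int_on a b (\<lambda>t. ennreal (t powr alpha))) / nu_meas lam a b) *
        (enn2real (int_on a b (\<lambda>t. ennreal (t powr ((2 * lam + 1) * conj_exp p)) * neg_pow p (t powr alpha)))
           / nu_meas lam a b) powr (p - 1) < C"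
      unfolding Ap_tilde_def by blast
    from C[rule_format, of 0 1] have
      f1: "int_on 0 1 (\<lambda>x. ennreal (x powr alpha)) < top" and
      f2: "int_on 0 1 (\<lambda>x. ennreal (x powr ((2 * lam + 1) * conj_exp p + alpha * (-1/(p-1))))) < top"
      by (simp_all add: rw3)
    have "alpha > -1" using f1 int_div[of "alpha"] by force
    moreover have "alpha * (-1/(p-1)) + (2 * lam + 1) * conj_exp p > -1"
      using f2 int_div[of "(2 * lam + 1) * conj_exp p + alpha * (-1/(p-1))"] by (force simp: add.commute)
    then have "alpha < ((2 * lam + 1) * conj_exp p + 1) * (p - 1)" by (rule iffD1[OF expo_aux[OF assms(2)]])
    moreover have "((2 * lam + 1) * conj_exp p + 1) * (p - 1) = p - 1 + (2 * lam + 1) * p"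
      using p1 unfolding conj_exp_def by (simp add: field_simps)
    ultimately show "-1 < alpha \<and> alpha < p - 1 + (2 * lam + 1) * p" by simp
  next
    assume rng: "-1 < alpha \<and> alpha < p - 1 + (2 * lam + 1) * p"
    have eq: "((2 * lam + 1) * conj_exp p + 1) * (p - 1) = p - 1 + (2 * lam + 1) * p"
      using p1 unfolding conj_exp_def by (simp add: field_simps)
    have b1: "alpha > -1" using rng by simp
    have "alpha < ((2 * lam + 1) * conj_exp p + 1) * (p - 1)" using rng eq by simp
    then have "alpha * (-1/(p-1)) + (2 * lam + 1) * conj_exp p > -1"
      by (rule iffD2[OF expo_aux[OF assms(2), of alpha "(2 * lam + 1) * conj_exp p"]])
    then have b2: "(2 * lam + 1) * conj_exp p + alpha * (-1/(p-1)) > -1" by simp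
    have q1: "conj_exp p * (p - 1) = p" using p1 unfolding conj_exp_def by simp
    have q2: "(-1/(p-1)) * (p - 1) = -1" using p1 by simp
    have ex: "alpha - (2 * lam + 1) + ((2 * lam + 1) * conj_exp p + alpha * (-1/(p-1)) - (2 * lam + 1)) * (p - 1) = 0"
      by (rule lin_aux[OF q1 q2])
    obtain C where C: "\<forall>a b. 0 \<le> a \<and> a < b \<longrightarrow>
      (FF alpha a b / FF (2 * lam + 1) a b) *
      (FF ((2 * lam + 1) * conj_exp p + alpha * (-1/(p-1))) a b / FF (2 * lam + 1) a b) powr (p - 1) \<le> C"
      using FF_bound[OF b1 b2 _ assms(2) ex] assms(1) by auto
    show "(\<lambda>t. t powr alpha) \<in> Ap_tilde p lam"
      unfolding Ap_tilde_def
    proof (intro CollectI conjI meas exI[of _ "C + 1"] allI impI)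
      fix t :: real show "0 \<le> t powr alpha" by simp
    next
      fix a b :: real assume "0 \<le> a \<and> a < b"
      then have ab: "0 \<le> a" "a < b" by auto
      show "int_on a b (\<lambda>t. ennreal (t powr alpha)) < top"
        using ab by (simp add: int_FF[OF b1])
    next
      fix a b :: real assume "0 \<le> a \<and> a < b"
      then have ab: "0 \<le> a" "a < b" by auto
      show "int_on a b (\<lambda>t. ennreal (t powr ((2 * lam + 1) * conj_exp p)) * neg_pow p (t powr alpha)) < top"
        unfolding rw3[OF ab(1)] int_FF[OF b2 ab(1) less_imp_le[OF ab(2)]] by simp
    next
      fix a b :: real assume "0 \<le> a \<and> a < b"
      then have ab: "0 \<le> a" "a < b" by auto
      have g: "2 * lam + 1 > -1" using assms by simp
      have "(enn2real (int_on a b (\<lambda>t. ennreal (t powr alpha))) / nu_meas lam a b) *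
        (enn2real (int_on a b (\<lambda>t. ennreal (t powr ((2 * lam + 1) * conj_exp p)) * neg_pow p (t powr alpha)))
           / nu_meas lam a b) powr (p - 1) \<le> C"
        unfolding rw3[OF ab(1)] nu_meas_def enn_FF[OF b1 ab] enn_FF[OF b2 ab] enn_FF[OF g ab]
        using ab C by simp
      then show "(enn2real (int_on a b (\<lambda>t. ennreal (t powr alpha))) / nu_meas lam a b) *
        (enn2real (int_on a b (\<lambda>t. ennreal (t powr ((2 * lam + 1) * conj_exp p)) * neg_pow p (t powr alpha)))
           / nu_meas lam a b) powr (p - 1) < C + 1" by simp
    qed
  qed
qed

end
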